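(* For every $n\in\mathbb{N}$, the pair $(\mathcal{A}_n,\mathcal{R}_{\mathrm{lps}_n})$ is a finite and complete presentation for the monoid $\mathrm{lps}_n$, and the pair $(\mathcal{A}_n,\mathcal{R}_{\mathrm{rps}_n})$ is a complete presentation for the monoid $\mathrm{rps}_n$.
   Context: Let $\mathcal{A}=\{1<2<3<\cdots\}$ be the positive integers viewed as a totally ordered alphabet and $\mathcal{A}_n=\{1<2<\cdots<n\}$. An lPS tableau is a finite (possibly empty) sequence of nonempty bottom-justified columns of boxes filled with elements of $\mathcal{A}$, such that the entries of each column are strictly decreasing from top to bottom and the bottom entries of the columns form a weakly increasing sequence from left to right. An rPS tableau is defined in the same way but with columns weakly decreasing from top to bottom and the bottom row strictly increasing from left to right. Right insertion of a symbol $a$ into an lPS tableau $B$: if $a$ is greater than or equal to every entry of the bottom row, append a new column consisting of $a$ at the right end; otherwise, let $z$ be the leftmost bottom-row entry with $z>a$ and put $a$ in a new box at the bottom of the column of $z$ (the previous entries of that column move up one box). Right insertion into an rPS tableau is the same except that a new column is created iff $a$ is strictly greater than every bottom-row entry, and otherwise $z$ is the leftmost bottom-row entry with $z\geq a$. For a word $w=w_1\cdots w_k$, $\mathfrak{R}_\ell(w)$ (resp. $\mathfrak{R}_r(w)$) is the tableau obtained by starting with the empty lPS (resp. rPS) tableau and right-inserting $w_1,\dots,w_k$ in this order. The monoid $\mathrm{lps}_n$ (resp. $\mathrm{rps}_n$) is the quotient of the free monoid $\mathcal{A}_n^*$ by the congruence $u\equiv v\iff \mathfrak{R}_\ell(u)=\mathfrak{R}_\ell(v)$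 (resp. $\mathfrak{R}_r(u)=\mathfrak{R}_r(v)$). $\mathcal{R}_{\mathrm{lps}_n}=\{(yux,yxu): m\geq 1,\ x,y,u_1,\dots,u_m\in\mathcal{A}_n,\ u=u_m\cdots u_1,\ x<y\leq u_1<\cdots<u_m\}$ and $\mathcal{R}_{\mathrm{rps}_n}=\{(yux,yxu): m\geq 1,\ x,y,u_1,\dots,u_m\in\mathcal{A}_n,\ u=u_m\cdots u_1,\ x\leq y< u_1\leq\cdots\leq u_m\}$. A presentation $(\Sigma,\mathcal{R})$ defines $M$ if $M\cong\Sigma^*/\mathcal{R}^\#$, where $\mathcal{R}^\#$ is the congruence generated by $\mathcal{R}$. Viewing $\mathcal{R}$ as a rewriting system with rules $r^+\to r^-$ for $(r^+,r^-)\in\mathcal{R}$ (applied to factors), the presentation is complete if the rewriting system is noetherian (no infinite chain of rewrites) and confluent. *)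

theory Defs
  imports Main
begin

abbreviation alph :: "nat \<Rightarrow> nat set" where "alph n \<equiv> {1..n}"

text \<open>A PS tableau is a list of columns (left to right). Each column is stored
  bottom-first, i.e. the head of a column is its bottom entry.\<close>
type_synonym tableau = "nat list list"

fun lps_ins :: "tableau \<Rightarrow> nat \<Rightarrow> tableau" where
  "lps_ins [] a = [[a]]"
| "lps_ins (c # cs) a = (if a < hd c then (a # c) # cs else c # lps_ins cs a)"

fun rps_ins :: "tableau \<Rightarrow> nat \<Rightarrow> tableau" where
  "rps_ins [] a = [[a]]"
| "rps_ins (c # cs) a = (if a \<le> hd c then (a # c) # cs else c # rps_ins cs a)"

definition Rl :: "nat list \<Rightarrow> tableau" where
  "Rl w = foldl lps_ins [] w"

definition Rr :: "nat list \<Rightarrow> tableau" where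
  "Rr w = foldl rps_ins [] w"

text \<open>The defining relations. The word u = u_m ... u_1 is the list us = [u_m,...,u_1],
  so u_1 = last us and u_1 < ... < u_m means us is strictly decreasing.\<close>
definition R_lps :: "nat \<Rightarrow> (nat list \<times> nat list) set" where
  "R_lps n = {(y # us @ [x], y # x # us) | x y us.
      us \<noteq> [] \<and> x \<in> alph n \<and> y \<in> alph n \<and> set us \<subseteq> alph n \<and>
      x < y \<and> y \<le> last us \<and> sorted_wrt (>) us}"

definition R_rps :: "nat \<Rightarrow> (nat list \<times> nat list) set" where
  "R_rps n = {(y # us @ [x], y # x # us) | x y us.
      us \<noteq> [] \<and> x \<in> alph n \<and> y \<in> alph n \<and> set us \<subseteq> alph n \<and>
      x \<le> y \<and> y < last us \<and> sorted_wrt (\<ge>) us}"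

definition rstep :: "'a set \<Rightarrow> ('a list \<times> 'a list) set \<Rightarrow> ('a list \<times> 'a list) set" where
  "rstep S R = {(u @ l @ v, u @ r @ v) | u l r v. (l, r) \<in> R \<and> u \<in> lists S \<and> v \<in> lists S}"

definition gen_cong :: "'a set \<Rightarrow> ('a list \<times> 'a list) set \<Rightarrow> ('a list \<times> 'a list) set" where
  "gen_cong S R = Id_on (lists S) \<union> (rstep S R \<union> (rstep S R)\<inverse>)\<^sup>+"

definition noetherian :: "('b \<times> 'b) set \<Rightarrow> bool" where
  "noetherian r \<longleftrightarrow> wf (r\<inverse>)"

definition confluent :: "('b \<times> 'b) set \<Rightarrow> bool" where
  "confluent r \<longleftrightarrow> (\<forall>a b c. (a, b) \<in> r\<^sup>* \<and> (a, c) \<in> r\<^sup>* \<longrightarrow>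
      (\<exists>d. (b, d) \<in> r\<^sup>* \<and> (c, d) \<in> r\<^sup>*))"

definition complete_pres :: "'a set \<Rightarrow> ('a list \<times> 'a list) set \<Rightarrow> bool" where
  "complete_pres S R \<longleftrightarrow> noetherian (rstep S R) \<and> confluent (rstep S R)"

text \<open>(S, R) presents the quotient of S* by the congruence induced by the map f
  (identity on generators): R# coincides with u ~ v iff f u = f v.\<close>
definition presents :: "'a set \<Rightarrow> ('a list \<times> 'a list) set \<Rightarrow> ('a list \<Rightarrow> 'b) \<Rightarrow> bool" where
  "presents S R f \<longleftrightarrow> (\<forall>u \<in> lists S. \<forall>v \<in> lists S. (u, v) \<in> gen_cong S R \<longleftrightarrow> f u = f v)"

end

theory Submission
  imports Defs
begin

fun gins :: "(nat \<Rightarrow> nat \<Rightarrow> bool) \<Rightarrow> tableau \<Rightarrow> nat \<Rightarrow> tableau" where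
  "gins P [] a = [[a]]"
| "gins P (c # cs) a = (if P a (hd c) then (a # c) # cs else c # gins P cs a)"

lemma lps_gins: "lps_ins = gins (<)"
proof (intro ext)
  fix T a show "lps_ins T a = gins (<) T a" by (induction T) auto
qed

lemma rps_gins: "rps_ins = gins (\<le>)"
proof (intro ext)
  fix T a show "rps_ins T a = gins (\<le>) T a" by (induction T) auto
qed

definition PPs :: "(nat \<Rightarrow> nat \<Rightarrow> bool) \<Rightarrow> bool" where
  "PPs P \<longleftrightarrow> P = (<) \<or> P = (\<le>)"

lemma PP_facts:
  assumes "PPs P"
  shows "P x y \<Longrightarrow> x \<le> y"
    and "\<not> P y h \<Longrightarrow> h \<le> y"
    and "\<not> P a y \<Longrightarrow> h \<le> y \<Longrightarrow> \<not> P a h"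
    and "P a b \<Longrightarrow> P b c \<Longrightarrow> P a c"
    and "\<not> P q b \<Longrightarrow> P a b \<Longrightarrow> \<not> P q a"
    and "P a b \<Longrightarrow> b \<le> c \<Longrightarrow> P a c"
    and "P b a \<Longrightarrow> \<not> P b y \<Longrightarrow> \<not> P a y"
    and "\<not> P q p \<Longrightarrow> p \<le> q"
    and "\<not> P a b \<Longrightarrow> c \<le> b \<Longrightarrow> \<not> P a c"
  using assms unfolding PPs_def by auto

lemma split_ins:
  assumes "PPs P"
  shows "\<exists>Pf Q. gins P T y = Pf @ Q \<and> Pf \<noteq> [] \<and> hd (last Pf) = y \<and> (\<forall>c\<in>set Pf. hd c \<le> y)"
proof (induction T)
  case Nil
  then show ?case by (intro exI[of _ "[[y]]"] exI[of _ "[]"]) auto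
next
  case (Cons c cs)
  show ?case
  proof (cases "P y (hd c)")
    case True
    then show ?thesis by (intro exI[of _ "[y # c]"] exI[of _ cs]) auto
  next
    case False
    from Cons obtain Pf Q where "gins P cs y = Pf @ Q" "Pf \<noteq> []" "hd (last Pf) = y" "\<forall>c\<in>set Pf. hd c \<le> y"
      by blast
    with False PP_facts(2)[OF assms] show ?thesis
      by (intro exI[of _ "c # Pf"] exI[of _ Q]) auto
  qed
qed

lemma passA:
  assumes "PPs P" "\<forall>c\<in>set Pf. hd c \<le> y" "\<not> P a y"
  shows "gins P (Pf @ Q) a = Pf @ gins P Q a"
  using assms(2) by (induction Pf) (auto dest: PP_facts(3)[OF assms(1) assms(3)])

lemma passA_foldl:
  assumes "PPs P" "\<forall>c\<in>set Pf. hd c \<le> y" "\<forall>a\<in>set w. \<not> P a y"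
  shows "foldl (gins P) (Pf @ Q) w = Pf @ foldl (gins P) Q w"
  using assms(3)
proof (induction w arbitrary: Q)
  case Nil then show ?case by simp
next
  case (Cons a w)
  then show ?case using passA[OF assms(1,2)] by simp
qed

lemma passX:
  assumes "\<exists>c\<in>set Pf. P x (hd c)"
  shows "gins P (Pf @ Q) x = gins P Pf x @ Q"
  using assms by (induction Pf) auto

lemma goodX:
  assumes "PPs P" "\<forall>c\<in>set Pf. hd c \<le> y" "P x y"
  shows "\<forall>c\<in>set (gins P Pf x). hd c \<le> y"
  using assms(2) PP_facts(1)[OF assms(1) assms(3)] by (induction Pf) auto

lemma commute:
  assumes "PPs P" "P x y" "\<forall>a\<in>set us. \<not> P a y"
  shows "foldl (gins P) T (y # us @ [x]) = foldl (gins P) T (y # x # us)"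
proof -
  obtain Pf Q where sp: "gins P T y = Pf @ Q" "Pf \<noteq> []" "hd (last Pf) = y" "\<forall>c\<in>set Pf. hd c \<le> y"
    using split_ins[OF assms(1)] by blast
  have ex: "\<exists>c\<in>set Pf. P x (hd c)" using sp(2,3) assms(2) by (intro bexI[of _ "last Pf"]) auto
  have "foldl (gins P) T (y # us @ [x]) = gins P (Pf @ foldl (gins P) Q us) x"
    using sp passA_foldl[OF assms(1) sp(4) assms(3)] by simp
  also have "\<dots> = gins P Pf x @ foldl (gins P) Q us" using passX[of Pf P x, OF ex] .
  also have "\<dots> = foldl (gins P) (gins P Pf x @ Q) us"
    using passA_foldl[OF assms(1) goodX[OF assms(1) sp(4) assms(2)] assms(3)] by simp
  also have "gins P Pf x @ Q = gins P (gins P T y) x" using sp passX[of Pf P x, OF ex] by simp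
  finally show ?thesis by simp
qed

definition tinv :: "(nat \<Rightarrow> nat \<Rightarrow> bool) \<Rightarrow> tableau \<Rightarrow> bool" where
  "tinv P T \<longleftrightarrow> (\<forall>c\<in>set T. c \<noteq> [] \<and> sorted_wrt P c) \<and> sorted_wrt (\<lambda>p q. \<not> P q p) (map hd T)"

lemma hd_set: "set (map hd (gins P T a)) \<subseteq> insert a (set (map hd T))"
  by (induction T) auto

lemma tinv_ins:
  assumes "PPs P" "tinv P T"
  shows "tinv P (gins P T a)"
  using assms(2)
proof (induction T)
  case Nil then show ?case by (simp add: tinv_def)
next
  case (Cons c cs)
  have c: "c \<noteq> []" "sorted_wrt P c" and cs: "tinv P cs"
    and hq: "\<forall>q\<in>set (map hd cs). \<not> P q (hd c)"
    using Cons.prems by (auto simp: tinv_def)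
  show ?case
  proof (cases "P a (hd c)")
    case True
    have "\<forall>b\<in>set c. P a b"
    proof
      fix b assume "b \<in> set c"
      then have "b = hd c \<or> b \<in> set (tl c)" using c(1) by (cases c) auto
      moreover have "\<forall>b\<in>set (tl c). P (hd c) b" using c by (cases c) auto
      ultimately show "P a b" using True PP_facts(4)[OF assms(1)] by blast
    qed
    moreover have "\<forall>q\<in>set (map hd cs). \<not> P q a" using hq True PP_facts(5)[OF assms(1)] by blast
    ultimately show ?thesis using True c cs Cons.prems by (auto simp: tinv_def)
  next
    case False
    have IH: "tinv P (gins P cs a)" using Cons.IH cs by blast
    have "\<forall>q\<in>set (map hd (gins P cs a)). \<not> P q (hd c)" using hd_set[of P cs a] hq False by blast
    then show ?thesis using False IH c by (auto simp: tinv_def)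
  qed
qed

lemma tinv_foldl:
  assumes "PPs P" "tinv P T"
  shows "tinv P (foldl (gins P) T w)"
  using assms(2) by (induction w arbitrary: T) (auto intro: tinv_ins[OF assms(1)])

lemma tinv_f:
  assumes "PPs P" shows "tinv P (foldl (gins P) [] w)"
  using tinv_foldl[OF assms, of "[]"] by (simp add: tinv_def)

definition GR :: "(nat \<Rightarrow> nat \<Rightarrow> bool) \<Rightarrow> nat \<Rightarrow> (nat list \<times> nat list) set" where
  "GR P n = {(y # us @ [x], y # x # us) | x y us.
      us \<noteq> [] \<and> x \<in> alph n \<and> y \<in> alph n \<and> set us \<subseteq> alph n \<and>
      P x y \<and> \<not> P (last us) y \<and> sorted_wrt (\<lambda>a b. P b a) us}"

lemma R_lps_GR: "R_lps n = GR (<) n"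
  unfolding R_lps_def GR_def by (auto simp: not_less)

lemma R_rps_GR: "R_rps n = GR (\<le>) n"
  unfolding R_rps_def GR_def by (auto simp: not_le)

lemma sorted_last:
  assumes "sorted_wrt Q us" "us \<noteq> []" "a \<in> set us"
  shows "a = last us \<or> Q a (last us)"
proof -
  have "us = butlast us @ [last us]" using assms(2) by simp
  then have "sorted_wrt Q (butlast us @ [last us])" using assms(1) by simp
  then have "\<forall>b\<in>set (butlast us). Q b (last us)" by (simp add: sorted_wrt_append)
  moreover have "a \<in> set (butlast us) \<or> a = last us"
    using assms(3) \<open>us = butlast us @ [last us]\<close> by (metis in_set_butlast_appendI last_in_set rotate1.simps(2) set_ConsD set_rotate1)
  ultimately show ?thesis by blast
qed

lemma GR_pres:
  assumes "PPs P" "(l, r) \<in> GR P n"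
  shows "foldl (gins P) T l = foldl (gins P) T r"
proof -
  obtain x y us where e: "l = y # us @ [x]" "r = y # x # us" and h: "us \<noteq> []" "P x y"
    "\<not> P (last us) y" "sorted_wrt (\<lambda>a b. P b a) us"
    using assms(2) unfolding GR_def by blast
  have "\<forall>a\<in>set us. \<not> P a y"
  proof
    fix a assume "a \<in> set us"
    then have "a = last us \<or> P (last us) a" using sorted_last[OF h(4) h(1)] by blast
    then show "\<not> P a y" using h(3) PP_facts(7)[OF assms(1)] by blast
  qed
  then show ?thesis using commute[OF assms(1) h(2)] e by simp
qed

lemma rstep_pres:
  assumes "PPs P" "(s, t) \<in> rstep S (GR P n)"
  shows "foldl (gins P) [] s = foldl (gins P) [] t"
  using assms(2) GR_pres[OF assms(1)] unfolding rstep_def by auto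


lemma list3_cases:
  obtains "T = []" | d where "T = [d]" | T0 c d where "T = T0 @ [c, d]"
proof (cases T rule: rev_cases)
  case Nil then show ?thesis using that by blast
next
  case (snoc ys d)
  then show ?thesis
  proof (cases ys rule: rev_cases)
    case Nil then show ?thesis using snoc that by simp
  next
    case (snoc T0 c) then show ?thesis using \<open>T = ys @ [d]\<close> that by simp
  qed
qed

lemma pass_pre:
  assumes "\<forall>c\<in>set T0. \<not> P a (hd c)"
  shows "gins P (T0 @ Q) a = T0 @ gins P Q a"
  using assms by (induction T0) auto

lemma rstep_snoc:
  assumes "(w, t) \<in> rstep S R" "a \<in> S"
  shows "(w @ [a], t @ [a]) \<in> rstep S R"
proof -
  obtain u l r v where "w = u @ l @ v" "t = u @ r @ v" "(l, r) \<in> R" "u \<in> lists S" "v \<in> lists S"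
    using assms(1) unfolding rstep_def by blast
  then show ?thesis unfolding rstep_def using assms(2)
    by (intro CollectI exI[of _ u] exI[of _ l] exI[of _ r] exI[of _ "v @ [a]"]) auto
qed

lemma nf_read:
  assumes PP: "PPs P" and "w \<in> lists (alph n)" and "\<forall>t. (w, t) \<notin> rstep (alph n) (GR P n)"
  shows "concat (map rev (foldl (gins P) [] w)) = w"
  using assms(2,3)
proof (induction w rule: rev_induct)
  case Nil then show ?case by simp
next
  case (snoc a w')
  have w'L: "w' \<in> lists (alph n)" and aS: "a \<in> alph n" using snoc.prems by auto
  have irr: "\<forall>t. (w', t) \<notin> rstep (alph n) (GR P n)"
    using snoc.prems(2) rstep_snoc[OF _ aS] by blast
  define T where "T = foldl (gins P) [] w'"
  have IH: "concat (map rev T) = w'" using snoc.IH[OF w'L irr] T_def by simp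
  have inv: "tinv P T" using tinv_f[OF PP] T_def by simp
  have eq: "foldl (gins P) [] (w' @ [a]) = gins P T a" using T_def by simp
  show ?case
  proof (cases T rule: list3_cases)
    case 1 then show ?thesis using eq IH by simp
  next
    case (2 d) then show ?thesis using eq IH by simp
  next
    case (3 T0 c d)
    have cne: "c \<noteq> []" and dne: "d \<noteq> []" and ds: "sorted_wrt P d"
      and sh: "sorted_wrt (\<lambda>p q. \<not> P q p) (map hd T0 @ [hd c, hd d])"
      using inv 3 by (auto simp: tinv_def)
    have cd: "\<not> P (hd d) (hd c)" and T0c: "\<forall>c'\<in>set T0. \<not> P (hd c) (hd c')"
      using sh by (auto simp: sorted_wrt_append)
    have rc: "rev c = rev (tl c) @ [hd c]" using cne by (cases c) auto
    have w'eq: "w' = (concat (map rev T0) @ rev (tl c)) @ (hd c # rev d) @ []"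
      using IH 3 rc by simp
    show ?thesis
    proof (cases "P a (hd c)")
      case True
      have mem: "set w' \<subseteq> alph n" using w'L by auto
      have "(hd c # rev d @ [a], hd c # a # rev d) \<in> GR P n"
        unfolding GR_def
        using True cd ds dne aS mem w'eq
        by (intro CollectI exI[of _ a] exI[of _ "hd c"] exI[of _ "rev d"])
           (auto simp: sorted_wrt_rev last_rev)
      then have "(w' @ [a], (concat (map rev T0) @ rev (tl c)) @ (hd c # a # rev d) @ []) \<in> rstep (alph n) (GR P n)"
        unfolding rstep_def using w'L w'eq
        by (intro CollectI exI[of _ "concat (map rev T0) @ rev (tl c)"] exI[of _ "hd c # rev d @ [a]"]
              exI[of _ "hd c # a # rev d"] exI[of _ "[]"]) auto
      then show ?thesis using snoc.prems(2) by blast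
    next
      case False
      have "\<forall>c'\<in>set T0. \<not> P a (hd c')"
        using T0c False PP_facts(8,9)[OF PP] by blast
      then have "gins P T a = T0 @ gins P [c, d] a" using 3 pass_pre by simp
      then show ?thesis using eq IH 3 False by simp
    qed
  qed
qed


fun num :: "nat \<Rightarrow> nat list \<Rightarrow> nat" where
  "num B [] = 0"
| "num B (a # s) = a * B ^ length s + num B s"

lemma num_append: "num B (xs @ ys) = num B xs * B ^ length ys + num B ys"
  by (induction xs) (auto simp: algebra_simps power_add)

lemma num_bound: "\<forall>a\<in>set s. a < B \<Longrightarrow> num B s < B ^ length s"
proof (induction s)
  case Nil then show ?case by simp
next
  case (Cons a s)
  have "a * B ^ length s + num B s < a * B ^ length s + B ^ length s" using Cons by simp
  also have "\<dots> = (a + 1) * B ^ length s" by simp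
  also have "\<dots> \<le> B * B ^ length s" using Cons.prems by (intro mult_right_mono) auto
  finally show ?case by simp
qed

lemma num_lt:
  assumes "length s = length t" "\<forall>c\<in>set s. c < B" "a < b"
  shows "num B (a # s) < num B (b # t)"
proof -
  have "num B (a # s) < a * B ^ length s + B ^ length s" using num_bound[OF assms(2)] by simp
  also have "\<dots> = (a + 1) * B ^ length s" by simp
  also have "\<dots> \<le> b * B ^ length s" using assms(3) by (intro mult_right_mono) auto
  also have "\<dots> \<le> num B (b # t)" using assms(1) by simp
  finally show ?thesis .
qed

lemma PP_lt: "PPs P \<Longrightarrow> P x y \<Longrightarrow> \<not> P a y \<Longrightarrow> x < a"
  unfolding PPs_def by auto

lemma GR_dec:
  assumes PP: "PPs P" and "(l, r) \<in> GR P n"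
  shows "length r = length l \<and> num (Suc n) r < num (Suc n) l"
proof -
  obtain x y us where e: "l = y # us @ [x]" "r = y # x # us" and h: "us \<noteq> []" "P x y"
    "\<not> P (last us) y" "sorted_wrt (\<lambda>a b. P b a) us" and m: "x \<in> alph n" "set us \<subseteq> alph n"
    using assms(2) unfolding GR_def by blast
  have ha: "\<not> P (hd us) y"
    using sorted_last[OF h(4) h(1), of "hd us"] h(1,3) PP_facts(7)[OF PP] by (cases us) auto
  have "num (Suc n) (x # us) < num (Suc n) (hd us # (tl us @ [x]))"
    using PP_lt[OF PP h(2) ha] m h(1) by (intro num_lt) (auto dest: list.set_sel(2))
  then have "num (Suc n) (x # us) < num (Suc n) (us @ [x])" using h(1) by (cases us) auto
  then show ?thesis using e by simp
qed

lemma rstep_dec: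
  assumes PP: "PPs P" and "(s, t) \<in> rstep (alph n) (GR P n)"
  shows "num (Suc n) t < num (Suc n) s"
proof -
  obtain u l r v where e: "s = u @ l @ v" "t = u @ r @ v" "(l, r) \<in> GR P n"
    using assms(2) unfolding rstep_def by blast
  have d: "length r = length l" "num (Suc n) r < num (Suc n) l" using GR_dec[OF PP e(3)] by auto
  have "num (Suc n) r * Suc n ^ length v < num (Suc n) l * Suc n ^ length v" using d by simp
  then show ?thesis using e d by (simp add: num_append algebra_simps)
qed

lemma noeth: "PPs P \<Longrightarrow> noetherian (rstep (alph n) (GR P n))"
  unfolding noetherian_def
  by (rule wf_subset[OF wf_measure[of "num (Suc n)"]]) (auto dest: rstep_dec)

lemma GR_lists: "(l, r) \<in> GR P n \<Longrightarrow> l \<in> lists (alph n) \<and> r \<in> lists (alph n)"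
  unfolding GR_def by auto

lemma rstep_lists: "(s, t) \<in> rstep (alph n) (GR P n) \<Longrightarrow> s \<in> lists (alph n) \<and> t \<in> lists (alph n)"
proof -
  assume "(s, t) \<in> rstep (alph n) (GR P n)"
  then obtain u l r v where e: "s = u @ l @ v" "t = u @ r @ v" "(l, r) \<in> GR P n"
    "u \<in> lists (alph n)" "v \<in> lists (alph n)" unfolding rstep_def by blast
  then show ?thesis using GR_lists[OF e(3)] by simp
qed

lemma abstract:
  fixes r :: "('a list \<times> 'a list) set" and f :: "'a list \<Rightarrow> 'b"
  assumes wf: "wf (r\<inverse>)"
    and W: "\<And>s t. (s, t) \<in> r \<Longrightarrow> s \<in> lists S \<and> t \<in> lists S"
    and pres: "\<And>s t. (s, t) \<in> r \<Longrightarrow> f s = f t"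
    and inj: "\<And>u v. u \<in> lists S \<Longrightarrow> v \<in> lists S \<Longrightarrow> \<forall>t. (u, t) \<notin> r \<Longrightarrow> \<forall>t. (v, t) \<notin> r
               \<Longrightarrow> f u = f v \<Longrightarrow> u = v"
    and rdef: "r = rstep S R"
  shows "presents S R f \<and> confluent r"
proof -
  have nf: "\<exists>z. (w, z) \<in> r\<^sup>* \<and> (\<forall>t. (z, t) \<notin> r)" for w
    using wf
  proof (induction w rule: wf_induct_rule)
    case (less w)
    show ?case
    proof (cases "\<forall>t. (w, t) \<notin> r")
      case True then show ?thesis by blast
    next
      case False
      then obtain t where t: "(w, t) \<in> r" by blast
      then obtain z where "(t, z) \<in> r\<^sup>*" "\<forall>t. (z, t) \<notin> r" using less by blast
      then show ?thesis using t by (meson converse_rtrancl_into_rtrancl)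
    qed
  qed
  have presS: "(a, b) \<in> r\<^sup>* \<Longrightarrow> f a = f b" for a b
    by (induction rule: rtrancl_induct) (auto dest: pres)
  have WS: "(a, b) \<in> r\<^sup>* \<Longrightarrow> a \<in> lists S \<Longrightarrow> b \<in> lists S" for a b
    by (induction rule: rtrancl_induct) (auto dest: W)
  have conf: "confluent r"
    unfolding confluent_def
  proof (intro allI impI)
    fix a b c assume h: "(a, b) \<in> r\<^sup>* \<and> (a, c) \<in> r\<^sup>*"
    show "\<exists>d. (b, d) \<in> r\<^sup>* \<and> (c, d) \<in> r\<^sup>*"
    proof (cases "a \<in> lists S")
      case False
      have "b = a" using h False by (metis W converse_rtranclE)
      moreover have "c = a" using h False by (metis W converse_rtranclE)
      ultimately show ?thesis by blast
    next
      case True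
      obtain b' where b': "(b, b') \<in> r\<^sup>*" "\<forall>t. (b', t) \<notin> r" using nf by blast
      obtain c' where c': "(c, c') \<in> r\<^sup>*" "\<forall>t. (c', t) \<notin> r" using nf by blast
      have bS: "b \<in> lists S" "c \<in> lists S" using WS h True by blast+
      have "b' = c'"
        using inj[OF WS[OF b'(1) bS(1)] WS[OF c'(1) bS(2)] b'(2) c'(2)]
          presS[OF b'(1)] presS[OF c'(1)] presS h by metis
      then show ?thesis using b' c' by blast
    qed
  qed
  have sym_pres: "(a, b) \<in> (r \<union> r\<inverse>)\<^sup>+ \<Longrightarrow> f a = f b" for a b
    by (induction rule: trancl_induct) (auto dest: pres)
  have "presents S R f"
    unfolding presents_def gen_cong_def
  proof (intro ballI iffI)
    fix u v assume "u \<in> lists S" "v \<in> lists S" "(u, v) \<in> Id_on (lists S) \<union> (rstep S R \<union> (rstep S R)\<inverse>)\<^sup>+"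
    then show "f u = f v" using sym_pres rdef by auto
  next
    fix u v assume uv: "u \<in> lists S" "v \<in> lists S" "f u = f v"
    obtain u' where u': "(u, u') \<in> r\<^sup>*" "\<forall>t. (u', t) \<notin> r" using nf by blast
    obtain v' where v': "(v, v') \<in> r\<^sup>*" "\<forall>t. (v', t) \<notin> r" using nf by blast
    have "u' = v'"
      using inj[OF WS[OF u'(1) uv(1)] WS[OF v'(1) uv(2)] u'(2) v'(2)]
        presS[OF u'(1)] presS[OF v'(1)] uv(3) by metis
    have "(u, u') \<in> (r \<union> r\<inverse>)\<^sup>*" using u'(1) rtrancl_mono[of r "r \<union> r\<inverse>"] by blast
    moreover have "(v, u') \<in> (r \<union> r\<inverse>)\<^sup>*" using v'(1) \<open>u' = v'\<close> rtrancl_mono[of r "r \<union> r\<inverse>"] by blast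
    then have "(u', v) \<in> (r \<union> r\<inverse>)\<^sup>*"
      by (metis converse_Un converse_converse rtrancl_converseI sup_commute)
    ultimately have "(u, v) \<in> (r \<union> r\<inverse>)\<^sup>*" by simp
    then show "(u, v) \<in> Id_on (lists S) \<union> (rstep S R \<union> (rstep S R)\<inverse>)\<^sup>+"
      using uv rdef by (auto simp: rtrancl_eq_or_trancl Id_on_def)
  qed
  with conf show ?thesis by blast
qed

lemma generic:
  assumes PP: "PPs P"
  shows "presents (alph n) (GR P n) (foldl (gins P) []) \<and> complete_pres (alph n) (GR P n)"
proof -
  have inj: "u = v" if "u \<in> lists (alph n)" "v \<in> lists (alph n)"
    "\<forall>t. (u, t) \<notin> rstep (alph n) (GR P n)" "\<forall>t. (v, t) \<notin> rstep (alph n) (GR P n)"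
    "foldl (gins P) [] u = foldl (gins P) [] v" for u v
    using nf_read[OF PP that(1,3)] nf_read[OF PP that(2,4)] that(5) by metis
  have "presents (alph n) (GR P n) (foldl (gins P) []) \<and> confluent (rstep (alph n) (GR P n))"
    by (rule abstract[OF noeth[OF PP, unfolded noetherian_def] rstep_lists rstep_pres[OF PP] inj refl])
  then show ?thesis using noeth[OF PP] unfolding complete_pres_def by blast
qed

lemma fin: "finite (R_lps n)"
proof -
  have "R_lps n \<subseteq> (\<lambda>(x, y, us). (y # us @ [x], y # x # us)) `
          (alph n \<times> alph n \<times> {us. set us \<subseteq> alph n \<and> length us \<le> n})"
  proof
    fix p assume "p \<in> R_lps n"
    then obtain x y us where e: "p = (y # us @ [x], y # x # us)" "x \<in> alph n" "y \<in> alph n"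
      "set us \<subseteq> alph n" "sorted_wrt (>) us" unfolding R_lps_def by blast
    have "distinct us" using e(5) by (induction us) auto
    then have "length us = card (set us)" by (simp add: distinct_card)
    also have "\<dots> \<le> card (alph n)" using e(4) by (intro card_mono) auto
    finally have "length us \<le> n" by simp
    then show "p \<in> (\<lambda>(x, y, us). (y # us @ [x], y # x # us)) `
          (alph n \<times> alph n \<times> {us. set us \<subseteq> alph n \<and> length us \<le> n})"
      using e by force
  qed
  moreover have "finite (alph n \<times> alph n \<times> {us. set us \<subseteq> alph n \<and> length us \<le> n})"
    by (intro finite_cartesian_product finite_lists_length_le) auto
  ultimately show ?thesis by (meson finite_imageI finite_subset)
qed

theorem theorem5p5:
  fixes n :: nat
  shows "presents (alph n) (R_lps n) Rl \<and> finite (R_lps n) \<and> complete_pres (alph n) (R_lps n)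
       \<and> presents (alph n) (R_rps n) Rr \<and> complete_pres (alph n) (R_rps n)"
proof -
  have l: "Rl = foldl (gins (<)) []" unfolding Rl_def lps_gins by (intro ext) simp
  have r: "Rr = foldl (gins (\<le>)) []" unfolding Rr_def rps_gins by (intro ext) simp
  show ?thesis
    using generic[of "(<)" n] generic[of "(\<le>)" n] fin[of n]
    unfolding l r R_lps_GR R_rps_GR by (auto simp: PPs_def)
qed

end
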